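(* In the standard LLP setup, suppose $K=\overline{K}$ and there is no starting error in $L(G,\gamma^N_{cons})$ (i.e. $f^N_{cons}(\epsilon)\neq\emptyset$). If $N_u(K)$ is defined and $N\ge N_u(K)+2$, then $L(G,\gamma^N_{cons})=\overline{K^\uparrow}$.
   Context: Standard LLP setup. $\Sigma=\Sigma_c\,\dot\cup\,\Sigma_{uc}$ is a finite alphabet partitioned into controllable and uncontrollable events. The plant $G$ has generated language $L(G)$ and marked language $L_m(G)$ with $L(G)=\overline{L_m(G)}$ ($\overline{M}$ = set of prefixes of strings in $M$). The legal language $K\subseteq L_m(G)$ satisfies $K=\overline{K}\cap L_m(G)$. For a prefix-closed $L$, $M$ is controllable w.r.t. $L$ if $\overline{M}\Sigma_{uc}\cap L\subseteq\overline{M}$; $K^\uparrow$ is the supremal sublanguage of $K$ controllable w.r.t. $L(G)$. For a language $L$ and $s\in\Sigma^*$: $L/s=\{t: st\in L\}$; $L|_N=\{t\in L:|t|\le N\}$; $\Sigma_{L(G)}(s)=\{\sigma\in\Sigma: s\sigma\in L(G)\}$. $M^{\uparrow/s|_N}$ is the supremal sublanguage of $M$ controllable w.r.t. $L(G)/s|_N$. Conservative attitude: $f^N_{cons}(s)=[K/s|_{N-1}]^{\uparrow/s|_N}$; control policy $\gamma^N_{cons}(s)=(\overline{f^N_{cons}(s)}\cap\Sigma)\cup(\Sigma_{uc}\cap\Sigma_{L(G)}(s))$. Closed-loop language $L(G,\gamma)$: $\epsilon\in L(G,\gamma)$, and $s\sigma\in L(G,\gamma)$ iff $s\in L(G,\gamma)$,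 $s\sigma\in L(G)$, $\sigma\in\gamma(s)$. For a language $L$, $N_u(L)=\max\{|t|: t\in\Sigma_{uc}^*,\ \exists u,v\in\Sigma^*,\ utv\in L\}$ if this maximum exists; otherwise undefined. *)

theory Defs
  imports Main
begin

text \<open>The alphabet is an explicit finite set Sig, partitioned into the uncontrollable
  events Sig_uc and the controllable events Sig - Sig_uc.\<close>

definition pre :: "'a list set \<Rightarrow> 'a list set" where
  "pre M = {s. \<exists>t. s @ t \<in> M}"

definition controllable :: "'a set \<Rightarrow> 'a list set \<Rightarrow> 'a list set \<Rightarrow> bool" where
  "controllable Sig_uc M L \<longleftrightarrow>
     (\<forall>s \<in> pre M. \<forall>\<sigma> \<in> Sig_uc. s @ [\<sigma>] \<in> L \<longrightarrow> s @ [\<sigma>] \<in> pre M)"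

definition supcon :: "'a set \<Rightarrow> 'a list set \<Rightarrow> 'a list set \<Rightarrow> 'a list set" where
  "supcon Sig_uc M L = \<Union>{M'. M' \<subseteq> M \<and> controllable Sig_uc M' L}"

definition quot :: "'a list set \<Rightarrow> 'a list \<Rightarrow> 'a list set" where
  "quot L s = {t. s @ t \<in> L}"

definition trunc :: "'a list set \<Rightarrow> nat \<Rightarrow> 'a list set" where
  "trunc L N = {t \<in> L. length t \<le> N}"

text \<open>Conservative attitude: f_cons^N(s) = [K/s|_{N-1}]^{up / s |_N}, the supremal sublanguage
  controllable w.r.t. L(G)/s|_N.\<close>
definition f_cons :: "'a set \<Rightarrow> 'a list set \<Rightarrow> 'a list set \<Rightarrow> nat \<Rightarrow> 'a list \<Rightarrow> 'a list set" where
  "f_cons Sig_uc LG K N s = supcon Sig_uc (trunc (quot K s) (N - 1)) (trunc (quot LG s) N)"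

definition gamma_cons :: "'a set \<Rightarrow> 'a set \<Rightarrow> 'a list set \<Rightarrow> 'a list set \<Rightarrow> nat \<Rightarrow> 'a list \<Rightarrow> 'a set" where
  "gamma_cons Sig Sig_uc LG K N s =
     {\<sigma> \<in> Sig. [\<sigma>] \<in> pre (f_cons Sig_uc LG K N s)} \<union> {\<sigma> \<in> Sig_uc. s @ [\<sigma>] \<in> LG}"

inductive_set closed_loop :: "'a list set \<Rightarrow> ('a list \<Rightarrow> 'a set) \<Rightarrow> 'a list set"
  for LG :: "'a list set" and \<gamma> :: "'a list \<Rightarrow> 'a set" where
  Nil: "[] \<in> closed_loop LG \<gamma>"
| snoc: "s \<in> closed_loop LG \<gamma> \<Longrightarrow> s @ [\<sigma>] \<in> LG \<Longrightarrow> \<sigma> \<in> \<gamma> s \<Longrightarrow> s @ [\<sigma>] \<in> closed_loop LG \<gamma>"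

text \<open>N_u(L): lengths of uncontrollable substrings; N_u(L) is defined and equals n iff n is
  the maximum of this set.\<close>
definition Nu_set :: "'a set \<Rightarrow> 'a list set \<Rightarrow> nat set" where
  "Nu_set Sig_uc L = {length t | t. t \<in> lists Sig_uc \<and> (\<exists>u v. u @ t @ v \<in> L)}"

definition is_Nu :: "'a set \<Rightarrow> 'a list set \<Rightarrow> nat \<Rightarrow> bool" where
  "is_Nu Sig_uc L n \<longleftrightarrow> n \<in> Nu_set Sig_uc L \<and> (\<forall>m \<in> Nu_set Sig_uc L. m \<le> n)"

end

theory Submission
  imports Defs
begin

lemma pre_I: "s @ t \<in> M \<Longrightarrow> s \<in> pre M"
  unfolding pre_def by blast

lemma sub_pre: "M \<subseteq> pre M"
  unfolding pre_def by (auto intro: exI[of _ "[]"])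

lemma pre_app: "s @ t \<in> pre M \<Longrightarrow> s \<in> pre M"
proof -
  assume "s @ t \<in> pre M"
  then obtain r where "s @ t @ r \<in> M" unfolding pre_def by auto
  thus ?thesis by (rule pre_I)
qed


lemma pre_mono: "A \<subseteq> B \<Longrightarrow> pre A \<subseteq> pre B"
  unfolding pre_def by blast

lemma supcon_sub: "supcon U M L \<subseteq> M"
  unfolding supcon_def by blast

lemma supcon_ctrl: "controllable U (supcon U M L) L"
  unfolding controllable_def
proof (intro ballI impI)
  fix s \<sigma> assume s: "s \<in> pre (supcon U M L)" and u: "\<sigma> \<in> U" and l: "s @ [\<sigma>] \<in> L"
  from s obtain t where "s @ t \<in> supcon U M L" unfolding pre_def by blast
  then obtain M' where M': "M' \<subseteq> M" "controllable U M' L" "s @ t \<in> M'"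
    unfolding supcon_def by blast
  have "s \<in> pre M'" using M'(3) by (rule pre_I)
  hence "s @ [\<sigma>] \<in> pre M'" using M'(2) u l unfolding controllable_def by blast
  moreover have "M' \<subseteq> supcon U M L" using M' unfolding supcon_def by blast
  ultimately show "s @ [\<sigma>] \<in> pre (supcon U M L)" using pre_mono by blast
qed

lemma supcon_max: "M' \<subseteq> M \<Longrightarrow> controllable U M' L \<Longrightarrow> M' \<subseteq> supcon U M L"
  unfolding supcon_def by blast

lemma lemA:
  assumes N: "N \<ge> 1"
    and s: "s = [] \<or> s \<in> pre (supcon U K L)"
    and t: "t \<in> pre (f_cons U L K N s)"
  shows "s @ t \<in> pre (supcon U K L)"
proof -
  define KU where "KU = supcon U K L"
  define F where "F = f_cons U L K N s"
  define B where "B = {s @ t | t. t \<in> F}"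
  have Fsub: "F \<subseteq> trunc (quot K s) (N - 1)"
    unfolding F_def f_cons_def by (rule supcon_sub)
  have Fctrl: "controllable U F (trunc (quot L s) N)"
    unfolding F_def f_cons_def by (rule supcon_ctrl)
  have KUctrl: "controllable U KU L" unfolding KU_def by (rule supcon_ctrl)
  have key: "x @ [u] \<in> pre B" if "us \<in> pre F" "x = s @ us" "u \<in> U" "x @ [u] \<in> L" for x us u
  proof -
    from that(1) obtain r where r: "us @ r \<in> F" unfolding pre_def by blast
    hence "length (us @ r) \<le> N - 1" using Fsub unfolding trunc_def by auto
    hence "length (us @ [u]) \<le> N" using N by simp
    moreover have "s @ us @ [u] \<in> L" using that by simp
    ultimately have "us @ [u] \<in> trunc (quot L s) N" unfolding trunc_def quot_def by simp
    hence "us @ [u] \<in> pre F" using Fctrl that(1,3) unfolding controllable_def by blast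
    then obtain r' where "us @ [u] @ r' \<in> F" unfolding pre_def by auto
    hence "s @ us @ [u] @ r' \<in> B" unfolding B_def by blast
    thus ?thesis using that(2) unfolding pre_def by auto
  qed
  have "controllable U (KU \<union> B) L"
    unfolding controllable_def
  proof (intro ballI impI)
    fix x u assume x: "x \<in> pre (KU \<union> B)" and u: "u \<in> U" and l: "x @ [u] \<in> L"
    from x obtain r where "x @ r \<in> KU \<or> x @ r \<in> B" unfolding pre_def by blast
    thus "x @ [u] \<in> pre (KU \<union> B)"
    proof
      assume "x @ r \<in> KU"
      hence "x \<in> pre KU" by (rule pre_I)
      hence "x @ [u] \<in> pre KU" using KUctrl u l unfolding controllable_def by blast
      thus ?thesis using pre_mono[of KU "KU \<union> B"] by blast
    next
      assume "x @ r \<in> B"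
      then obtain t0 where t0: "t0 \<in> F" "x @ r = s @ t0" unfolding B_def by blast
      from t0(2) obtain us where
        "(x = s @ us \<and> us @ r = t0) \<or> (x @ us = s \<and> r = us @ t0)"
        by (auto simp: append_eq_append_conv2)
      thus ?thesis
      proof
        assume h: "x = s @ us \<and> us @ r = t0"
        hence "us \<in> pre F" using t0 pre_I by metis
        hence "x @ [u] \<in> pre B" using key h u l by blast
        thus ?thesis using pre_mono[of B "KU \<union> B"] by blast
      next
        assume h: "x @ us = s \<and> r = us @ t0"
        show ?thesis
        proof (cases "us = []")
          case True
          have "[] \<in> pre F" using t0(1) pre_I[of "[]" t0 F] by simp
          hence "x @ [u] \<in> pre B" using key[of "[]" x u] h True u l by simp
          thus ?thesis using pre_mono[of B "KU \<union> B"] by blast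
        next
          case False
          hence "s \<in> pre KU" using s h KU_def by auto
          hence "x \<in> pre KU" using h pre_app by blast
          hence "x @ [u] \<in> pre KU" using KUctrl u l unfolding controllable_def by blast
          thus ?thesis using pre_mono[of KU "KU \<union> B"] by blast
        qed
      qed
    qed
  qed
  moreover have "KU \<union> B \<subseteq> K"
    using Fsub supcon_sub[of U K L] unfolding KU_def B_def trunc_def quot_def by auto
  ultimately have "KU \<union> B \<subseteq> KU" unfolding KU_def by (meson supcon_max)
  moreover from t obtain r where "t @ r \<in> F" unfolding pre_def F_def by blast
  hence "s @ t @ r \<in> B" unfolding B_def by blast
  ultimately show ?thesis unfolding KU_def using pre_I[of "s @ t" r] by auto
qed

theorem theorem10:
  fixes Sig Sig_uc :: "'a set" and Lm K :: "'a list set" and N n :: nat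
  assumes "finite Sig"
    and "Sig_uc \<subseteq> Sig"
    and "Lm \<subseteq> lists Sig"
    and "K \<subseteq> Lm"
    and "K = pre K \<inter> Lm"
    and "K = pre K"
    and "f_cons Sig_uc (pre Lm) K N [] \<noteq> {}"
    and "is_Nu Sig_uc K n"
    and "N \<ge> n + 2"
  shows "closed_loop (pre Lm) (gamma_cons Sig Sig_uc (pre Lm) K N)
           = pre (supcon Sig_uc K (pre Lm))"
proof -
  define L where "L = pre Lm"
  define KU where "KU = supcon Sig_uc K L"
  have KUctrl: "controllable Sig_uc KU L" unfolding KU_def by (rule supcon_ctrl)
  have KUK: "pre KU \<subseteq> K" using pre_mono[OF supcon_sub[of Sig_uc K L]] assms(6) KU_def by auto
  have KL: "K \<subseteq> L" using assms(4) sub_pre[of Lm] L_def by auto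
  have LSig: "L \<subseteq> lists Sig" using assms(3) unfolding L_def pre_def by auto
  have N1: "N \<ge> 1" using assms(9) by simp
  have "x \<in> pre KU" if "x \<in> closed_loop L (gamma_cons Sig Sig_uc L K N)" for x
    using that
  proof (induction rule: closed_loop.induct)
    case Nil
    from assms(7) obtain t where "t \<in> f_cons Sig_uc L K N []" using L_def by auto
    hence "[] \<in> pre (f_cons Sig_uc L K N [])" using pre_I[of "[]" t] by simp
    from lemA[OF N1 _ this] show ?case unfolding KU_def by simp
  next
    case (snoc s \<sigma>)
    show ?case
    proof (cases "\<sigma> \<in> Sig_uc")
      case True
      thus ?thesis using KUctrl snoc unfolding controllable_def by blast
    next
      case False
      hence "[\<sigma>] \<in> pre (f_cons Sig_uc L K N s)" using snoc(3) unfolding gamma_cons_def by auto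
      from lemA[OF N1 _ this] snoc.IH show ?thesis unfolding KU_def by simp
    qed
  qed
  moreover have "x \<in> closed_loop L (gamma_cons Sig Sig_uc L K N)" if "x \<in> pre KU" for x
    using that
  proof (induction x rule: rev_induct)
    case Nil
    show ?case by (rule closed_loop.Nil)
  next
    case (snoc \<sigma> x)
    have xK: "x \<in> pre KU" using snoc(2) pre_app by blast
    have xL: "x @ [\<sigma>] \<in> L" using snoc(2) KUK KL by blast
    have sig: "\<sigma> \<in> Sig" using xL LSig by auto
    define M where "M = {t \<in> quot (pre KU) x. t \<in> lists Sig_uc \<or> (\<exists>w \<in> lists Sig_uc. t = \<sigma> # w)}"
    have len: "length t \<le> n" if "t \<in> lists Sig_uc" "u @ t @ v \<in> K" for t u v
      using assms(8) that unfolding is_Nu_def Nu_set_def by blast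
    have "M \<subseteq> trunc (quot K x) (N - 1)"
    proof
      fix t assume t: "t \<in> M"
      hence tK: "x @ t \<in> K" using KUK unfolding M_def quot_def by auto
      from t have "t \<in> lists Sig_uc \<or> (\<exists>w \<in> lists Sig_uc. t = \<sigma> # w)" unfolding M_def by auto
      hence "length t \<le> n + 1"
      proof
        assume "t \<in> lists Sig_uc" thus ?thesis using len[of t x "[]"] tK by simp
      next
        assume "\<exists>w \<in> lists Sig_uc. t = \<sigma> # w"
        then obtain w where "w \<in> lists Sig_uc" "t = \<sigma> # w" by blast
        thus ?thesis using len[of w "x @ [\<sigma>]" "[]"] tK by simp
      qed
      thus "t \<in> trunc (quot K x) (N - 1)" using tK assms(9) unfolding trunc_def quot_def by simp
    qed
    moreover have "controllable Sig_uc M (trunc (quot L x) N)"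
      unfolding controllable_def
    proof (intro ballI impI)
      fix y u assume y: "y \<in> pre M" and u: "u \<in> Sig_uc" and l: "y @ [u] \<in> trunc (quot L x) N"
      from y obtain r where r: "y @ r \<in> M" unfolding pre_def by blast
      hence "x @ y @ r \<in> pre KU" unfolding M_def quot_def by auto
      hence "x @ y \<in> pre KU" using pre_app[of "x @ y" r] by simp
      moreover have "(x @ y) @ [u] \<in> L" using l unfolding trunc_def quot_def by simp
      ultimately have "(x @ y) @ [u] \<in> pre KU" using KUctrl u unfolding controllable_def by blast
      moreover have "y @ [u] \<in> lists Sig_uc \<or> (\<exists>w \<in> lists Sig_uc. y @ [u] = \<sigma> # w)"
      proof -
        from r have "y @ r \<in> lists Sig_uc \<or> (\<exists>w \<in> lists Sig_uc. y @ r = \<sigma> # w)"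
          unfolding M_def by auto
        thus ?thesis
        proof
          assume "y @ r \<in> lists Sig_uc" thus ?thesis using u by simp
        next
          assume "\<exists>w \<in> lists Sig_uc. y @ r = \<sigma> # w"
          then obtain w where w: "w \<in> lists Sig_uc" "y @ r = \<sigma> # w" by blast
          show ?thesis
          proof (cases y)
            case Nil thus ?thesis using u by simp
          next
            case (Cons a y')
            hence "a = \<sigma>" "y' @ r = w" using w by auto
            thus ?thesis using Cons w u by auto
          qed
        qed
      qed
      ultimately have "y @ [u] \<in> M" unfolding M_def quot_def by simp
      thus "y @ [u] \<in> pre M" using sub_pre by blast
    qed
    ultimately have "M \<subseteq> f_cons Sig_uc L K N x" unfolding f_cons_def by (rule supcon_max)
    moreover have "[\<sigma>] \<in> M" using snoc(2) unfolding M_def quot_def by simp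
    ultimately have "[\<sigma>] \<in> pre (f_cons Sig_uc L K N x)" using sub_pre by blast
    hence "\<sigma> \<in> gamma_cons Sig Sig_uc L K N x" using sig unfolding gamma_cons_def by simp
    thus ?case using closed_loop.snoc[OF snoc(1)[OF xK] xL] by simp
  qed
  ultimately show ?thesis unfolding L_def KU_def by blast
qed

end
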